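(* Let $n\ge 5$. Then the metric dimension of $L(n)$ is $n-2$.
   Context: For $n\ge 5$, $H(n)$ is the graph with vertex set $V_1\cup V_2$, where $V_1=\{v_1,\dots,v_n\}$ and $V_2=\{v_iv_j: 1\le i<j\le n\}$, and $v_r$ is adjacent to $v_iv_j$ iff $r\in\{i,j\}$ (no other edges). $L(n)$ is the line graph of $H(n)$: its vertices are the edges of $H(n)$, two being adjacent iff they share an endpoint. $d$ is the shortest-path distance; a set $Q$ of vertices is a resolving set of $G$ if any two distinct vertices $x,y$ satisfy $(d(x,q))_{q\in Q}\neq(d(y,q))_{q\in Q}$; the metric dimension is the minimum size of a resolving set. *)

theory Defs
  imports Main "HOL-Library.Extended_Nat"
begin

inductive walk :: "'a set \<Rightarrow> ('a \<Rightarrow> 'a \<Rightarrow> bool) \<Rightarrow> nat \<Rightarrow> 'a \<Rightarrow> 'a \<Rightarrow> bool"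
  for V adj where
  walk0: "x \<in> V \<Longrightarrow> walk V adj 0 x x"
| walkS: "walk V adj k x y \<Longrightarrow> adj y z \<Longrightarrow> z \<in> V \<Longrightarrow> walk V adj (Suc k) x z"

text \<open>Shortest-path distance (infinite if no walk exists).\<close>
definition gdist :: "'a set \<Rightarrow> ('a \<Rightarrow> 'a \<Rightarrow> bool) \<Rightarrow> 'a \<Rightarrow> 'a \<Rightarrow> enat" where
  "gdist V adj x y = (INF k \<in> {k. walk V adj k x y}. enat k)"

definition resolving_set :: "'a set \<Rightarrow> ('a \<Rightarrow> 'a \<Rightarrow> bool) \<Rightarrow> 'a set \<Rightarrow> bool" where
  "resolving_set V adj Q \<longleftrightarrow> Q \<subseteq> V \<and>
     (\<forall>x\<in>V. \<forall>y\<in>V. x \<noteq> y \<longrightarrow> (\<exists>q\<in>Q. gdist V adj x q \<noteq> gdist V adj y q))"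

definition metric_dimension :: "'a set \<Rightarrow> ('a \<Rightarrow> 'a \<Rightarrow> bool) \<Rightarrow> nat" where
  "metric_dimension V adj = (LEAST k. \<exists>Q. finite Q \<and> card Q = k \<and> resolving_set V adj Q)"

text \<open>Vertices of H(n): Inl r for v_r (1 \<le> r \<le> n), Inr {i,j} for v_iv_j (1 \<le> i < j \<le> n).
  Edges are 2-element sets of vertices.\<close>

definition H_vertices :: "nat \<Rightarrow> (nat + nat set) set" where
  "H_vertices n = Inl ` {1..n} \<union> {Inr {i, j} | i j. 1 \<le> i \<and> i < j \<and> j \<le> n}"

definition H_edges :: "nat \<Rightarrow> (nat + nat set) set set" where
  "H_edges n = {{Inl r, Inr {i, j}} | r i j. 1 \<le> i \<and> i < j \<and> j \<le> n \<and> r \<in> {i, j}}"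

definition line_adj :: "'a set \<Rightarrow> 'a set \<Rightarrow> bool" where
  "line_adj e f \<longleftrightarrow> e \<noteq> f \<and> e \<inter> f \<noteq> {}"

definition L_vertices :: "nat \<Rightarrow> (nat + nat set) set set" where
  "L_vertices n = H_edges n"

end

theory Submission
  imports Defs
begin

definition pv :: "nat \<Rightarrow> nat \<Rightarrow> (nat + nat set) set" where
  "pv r s = {Inl r, Inr {r, s}}"

definition DD :: "nat \<Rightarrow> nat \<Rightarrow> nat \<Rightarrow> nat \<Rightarrow> nat" where
  "DD a b c d = (if a = c \<and> b = d then 0 else if a = c \<or> (a = d \<and> b = c) then 1
     else if b = c \<or> a = d then 2 else 3)"

lemma pv_eq: "pv a b = pv c d \<longleftrightarrow> a = c \<and> b = d"
  unfolding pv_def by (auto simp: doubleton_eq_iff)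

lemma pv_adj: "line_adj (pv a b) (pv c d) \<longleftrightarrow> \<not> (a = c \<and> b = d) \<and> (a = c \<or> (a = d \<and> b = c))"
  unfolding line_adj_def pv_eq by (auto simp: pv_def doubleton_eq_iff)

lemma L_eq: "L_vertices n = {pv r s | r s. r \<in> {1..n} \<and> s \<in> {1..n} \<and> r \<noteq> s}"
proof (rule set_eqI, rule iffI)
  fix x assume "x \<in> L_vertices n"
  then obtain r i j where x: "x = {Inl r, Inr {i, j}}" "1 \<le> i" "i < j" "j \<le> n" "r \<in> {i, j}"
    by (auto simp: L_vertices_def H_edges_def)
  show "x \<in> {pv r s | r s. r \<in> {1..n} \<and> s \<in> {1..n} \<and> r \<noteq> s}"
  proof (cases "r = i")
    case True
    then have xe: "x = pv i j" using x by (simp add: pv_def)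
    have "i \<in> {1..n} \<and> j \<in> {1..n} \<and> i \<noteq> j" using x by auto
    then show ?thesis using xe by blast
  next
    case False
    then have xe: "x = pv j i" using x by (auto simp: pv_def insert_commute)
    have "j \<in> {1..n} \<and> i \<in> {1..n} \<and> j \<noteq> i" using x by auto
    then show ?thesis using xe by blast
  qed
next
  fix x assume "x \<in> {pv r s | r s. r \<in> {1..n} \<and> s \<in> {1..n} \<and> r \<noteq> s}"
  then obtain r s where x: "x = pv r s" "r \<in> {1..n}" "s \<in> {1..n}" "r \<noteq> s" by blast
  show "x \<in> L_vertices n"
  proof (cases "r < s")
    case True
    have "{Inl r, Inr {r, s}} \<in> H_edges n"
      unfolding H_edges_def
      apply (rule CollectI)
      apply (rule exI[of _ r], rule exI[of _ r], rule exI[of _ s])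
      using x True by simp
    then show ?thesis using x(1) by (simp add: L_vertices_def pv_def)
  next
    case False
    then have sr: "s < r" using x by auto
    have "{Inl r, Inr {s, r}} \<in> H_edges n"
      unfolding H_edges_def
      apply (rule CollectI)
      apply (rule exI[of _ r], rule exI[of _ s], rule exI[of _ r])
      using x sr by simp
    then show ?thesis using x(1) by (simp add: L_vertices_def pv_def insert_commute)
  qed
qed

lemma pvL: "pv r s \<in> L_vertices n \<longleftrightarrow> r \<in> {1..n} \<and> s \<in> {1..n} \<and> r \<noteq> s"
  unfolding L_eq by (auto simp: pv_eq)

lemma DD_lip: "line_adj (pv c d) (pv e f) \<Longrightarrow> a \<noteq> b \<Longrightarrow> c \<noteq> d \<Longrightarrow> e \<noteq> f \<Longrightarrow> DD a b e f \<le> DD a b c d + 1"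
  unfolding pv_adj DD_def by auto

lemma walk_lower:
  assumes "walk V adj k x y" "V = L_vertices n" "adj = line_adj" "x = pv a b" "a \<noteq> b"
  shows "\<exists>c d. y = pv c d \<and> c \<noteq> d \<and> DD a b c d \<le> k"
  using assms
proof (induction rule: walk.induct)
  case (walk0 x)
  then show ?case by (auto simp: DD_def)
next
  case (walkS k x y z)
  then obtain c d where cd: "y = pv c d" "c \<noteq> d" "DD a b c d \<le> k" by blast
  from walkS obtain e f where ef: "z = pv e f" "e \<noteq> f" by (auto simp: L_eq)
  have "adj y z" by (rule walkS.hyps(2))
  then have "line_adj (pv c d) (pv e f)" using walkS.prems(2) cd(1) ef(1) by simp
  then have "DD a b e f \<le> DD a b c d + 1" using DD_lip walkS.prems(4) cd(2) ef(2) by blast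
  then have "DD a b e f \<le> Suc k" using cd by linarith
  then show ?case using ef by blast
qed

lemma walk_snoc: "walk V adj k x y \<Longrightarrow> adj y z \<Longrightarrow> z \<in> V \<Longrightarrow> walk V adj (Suc k) x z"
  by (rule walkS)

lemma gdist_pv:
  assumes "a \<in> {1..n}" "b \<in> {1..n}" "c \<in> {1..n}" "d \<in> {1..n}" "a \<noteq> b" "c \<noteq> d"
  shows "gdist (L_vertices n) line_adj (pv a b) (pv c d) = enat (DD a b c d)"
proof -
  let ?V = "L_vertices n"
  have w: "walk ?V line_adj (DD a b c d) (pv a b) (pv c d)"
  proof -
    have x: "pv a b \<in> ?V" using assms by (simp add: pvL)
    have w0: "walk ?V line_adj 0 (pv a b) (pv a b)" using x by (rule walk0)
    show ?thesis
    proof (cases "a = c \<and> b = d")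
      case True then have "DD a b c d = 0" by (simp add: DD_def)
      then show ?thesis using w0 True by simp
    next
      case F1: False
      show ?thesis
      proof (cases "a = c \<or> (a = d \<and> b = c)")
        case True
        have "walk ?V line_adj (Suc 0) (pv a b) (pv c d)"
          by (rule walkS[OF w0]) (use True F1 assms in \<open>auto simp: pv_adj pvL\<close>)
        moreover have "DD a b c d = 1" using True F1 by (simp add: DD_def)
        ultimately show ?thesis by simp
      next
        case F2: False
        show ?thesis
        proof (cases "b = c")
          case True
          have w1: "walk ?V line_adj (Suc 0) (pv a b) (pv b a)"
            by (rule walkS[OF w0]) (use assms in \<open>auto simp: pv_adj pvL\<close>)
          have "walk ?V line_adj (Suc (Suc 0)) (pv a b) (pv c d)"
            by (rule walkS[OF w1]) (use True F1 F2 assms in \<open>auto simp: pv_adj pvL\<close>)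
          moreover have "DD a b c d = Suc (Suc 0)" using True F1 F2 by (simp add: DD_def)
          ultimately show ?thesis by simp
        next
          case F3: False
          show ?thesis
          proof (cases "a = d")
            case True
            have w1: "walk ?V line_adj (Suc 0) (pv a b) (pv a c)"
              by (rule walkS[OF w0]) (use assms F1 F2 F3 True in \<open>auto simp: pv_adj pvL\<close>)
            have "walk ?V line_adj (Suc (Suc 0)) (pv a b) (pv c d)"
              by (rule walkS[OF w1]) (use True F1 F2 F3 assms in \<open>auto simp: pv_adj pvL\<close>)
            moreover have "DD a b c d = Suc (Suc 0)" using True F1 F2 F3 by (simp add: DD_def)
            ultimately show ?thesis by simp
          next
            case F4: False
            have w1: "walk ?V line_adj (Suc 0) (pv a b) (pv a c)"
              by (rule walkS[OF w0]) (use assms F1 F2 F3 F4 in \<open>auto simp: pv_adj pvL\<close>)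
            have w2: "walk ?V line_adj (Suc (Suc 0)) (pv a b) (pv c a)"
              by (rule walkS[OF w1]) (use assms F1 F2 F3 F4 in \<open>auto simp: pv_adj pvL\<close>)
            have "walk ?V line_adj (Suc (Suc (Suc 0))) (pv a b) (pv c d)"
              by (rule walkS[OF w2]) (use F1 F2 F3 F4 assms in \<open>auto simp: pv_adj pvL\<close>)
            moreover have "DD a b c d = Suc (Suc (Suc 0))" using F1 F2 F3 F4 by (simp add: DD_def)
            ultimately show ?thesis by simp
          qed
        qed
      qed
    qed
  qed
  have lb: "enat (DD a b c d) \<le> enat k" if "walk ?V line_adj k (pv a b) (pv c d)" for k
    using walk_lower[OF that refl refl refl assms(5)] by (auto simp: pv_eq)
  show ?thesis unfolding gdist_def
    apply (rule order.antisym)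
     apply (rule INF_lower2[of "DD a b c d"]) using w apply auto[2]
    apply (rule INF_greatest) using lb by auto
qed

lemma keyA:
  assumes n: "5 \<le> n" and ab: "a \<in> {1..n}" "b \<in> {1..n}" "a \<noteq> b"
    and cd: "c \<in> {1..n}" "d \<in> {1..n}" "c \<noteq> d" and ne: "\<not> (a = c \<and> b = d)"
    and eq: "\<And>r. r \<in> {1..n-2} \<Longrightarrow> DD a b r n = DD c d r n"
    and a: "a \<le> n - 2"
  shows False
proof -
  define r0 where "r0 = (if 1 \<notin> {a, b} then 1 else if 2 \<notin> {a, b} then 2 else (3::nat))"
  have r0: "r0 \<in> {1..n-2}" "r0 \<noteq> a" "r0 \<noteq> b" using n ab unfolding r0_def by auto
  have ea: "DD a b a n = DD c d a n" using eq ab a by auto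
  have "DD a b a n \<le> 1" using a n by (simp add: DD_def)
  then have "DD c d a n \<le> 1" using ea by simp
  then have "c = a \<or> (c = n \<and> d = a)" unfolding DD_def by (auto split: if_splits)
  then show False
  proof
    assume ca: "c = a"
    then have bd: "b \<noteq> d" using ne by auto
    have bn: "b \<noteq> n"
    proof
      assume "b = n" then show False using ea ca bd by (simp add: DD_def)
    qed
    have dn: "d \<noteq> n"
    proof
      assume "d = n" then show False using ea ca bd by (simp add: DD_def)
    qed
    have "b \<le> n - 2 \<or> d \<le> n - 2" using bn dn bd ab cd by auto
    then show False
    proof
      assume "b \<le> n - 2"
      then have "DD a b b n = DD c d b n" using eq ab by auto
      then show False using ca bd ab a n by (simp add: DD_def split: if_splits)
    next
      assume "d \<le> n - 2"
      then have "DD a b d n = DD c d d n" using eq cd by auto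
      then show False using ca bd cd a n by (simp add: DD_def split: if_splits)
    qed
  next
    assume cn: "c = n \<and> d = a"
    have bn: "b \<noteq> n"
    proof
      assume "b = n"
      moreover have "a \<noteq> n" using a n by auto
      ultimately show False using ea cn by (simp add: DD_def)
    qed
    have "DD a b r0 n = DD c d r0 n" using eq r0 by blast
    then show False using cn bn r0 a n by (simp add: DD_def split: if_splits)
  qed
qed

lemma keyC:
  assumes n: "5 \<le> n" and ab: "a \<in> {1..n}" "b \<in> {1..n}" "a \<noteq> b"
    and cd: "c \<in> {1..n}" "d \<in> {1..n}" "c \<noteq> d" and ne: "\<not> (a = c \<and> b = d)"
    and eq: "\<And>r. r \<in> {1..n-2} \<Longrightarrow> DD a b r n = DD c d r n"
    and a: "a > n - 2" and c: "c > n - 2"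
  shows False
proof -
  define r0 where "r0 = (if 1 \<notin> {a, b} then 1 else if 2 \<notin> {a, b} then 2 else (3::nat))"
  have r0: "r0 \<in> {1..n-2}" "r0 \<noteq> a" "r0 \<noteq> b" using n ab unfolding r0_def by auto
  define r1 where "r1 = (if 1 \<notin> {c, d} then 1 else if 2 \<notin> {c, d} then 2 else (3::nat))"
  have r1: "r1 \<in> {1..n-2}" "r1 \<noteq> c" "r1 \<noteq> d" using n cd unfolding r1_def by auto
  show False
  proof (cases "a = c")
    case True
    then have bd: "b \<noteq> d" using ne by auto
    have "b \<le> n - 2 \<or> d \<le> n - 2" using bd ab cd True a by auto
    then show False
    proof
      assume "b \<le> n - 2"
      then have "DD a b b n = DD c d b n" using eq ab by auto
      then show False using True bd ab a n by (simp add: DD_def split: if_splits)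
    next
      assume "d \<le> n - 2"
      then have "DD a b d n = DD c d d n" using eq cd by auto
      then show False using True bd cd a n by (simp add: DD_def split: if_splits)
    qed
  next
    case False
    then have "(a = n \<and> c = n - 1) \<or> (a = n - 1 \<and> c = n)" using a c ab cd by auto
    then show False
    proof
      assume h: "a = n \<and> c = n - 1"
      have "DD a b r1 n = DD c d r1 n" using eq r1 by blast
      then show False using h r1 n by (simp add: DD_def split: if_splits)
    next
      assume h: "a = n - 1 \<and> c = n"
      have "DD a b r0 n = DD c d r0 n" using eq r0 by blast
      then show False using h r0 n by (simp add: DD_def split: if_splits)
    qed
  qed
qed

lemma key:
  assumes n: "5 \<le> n" and ab: "a \<in> {1..n}" "b \<in> {1..n}" "a \<noteq> b"
    and cd: "c \<in> {1..n}" "d \<in> {1..n}" "c \<noteq> d" and ne: "\<not> (a = c \<and> b = d)"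
    and eq: "\<And>r. r \<in> {1..n-2} \<Longrightarrow> DD a b r n = DD c d r n"
  shows False
proof (cases "a \<le> n - 2")
  case True
  then show False using keyA[OF n ab cd ne eq] by blast
next
  case F: False
  show False
  proof (cases "c \<le> n - 2")
    case True
    have ne': "\<not> (c = a \<and> d = b)" using ne by auto
    have eq': "\<And>r. r \<in> {1..n-2} \<Longrightarrow> DD c d r n = DD a b r n" using eq by simp
    show False using keyA[OF n cd ab ne' eq' True] .
  next
    case False
    then show False using keyC[OF n ab cd ne eq] F by simp
  qed
qed

definition fstv :: "(nat + nat set) set \<Rightarrow> nat" where
  "fstv e = (THE a. Inl a \<in> e)"

lemma fstv_pv[simp]: "fstv (pv a b) = a"
  unfolding fstv_def pv_def by simp

lemma three_elems:
  assumes "finite S" "3 \<le> card S"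
  obtains x y z where "x \<in> S" "y \<in> S" "z \<in> S" "x \<noteq> y" "y \<noteq> z" "x \<noteq> z"
proof -
  obtain T where "T \<subseteq> S" "card T = 3" using obtain_subset_with_card_n assms by metis
  then obtain x y z where "T = {x, y, z}" "x \<noteq> y" "y \<noteq> z" "x \<noteq> z" using card_3_iff[of T] by blast
  then show ?thesis using that \<open>T \<subseteq> S\<close> by blast
qed

lemma upper:
  assumes n: "5 \<le> n"
  shows "resolving_set (L_vertices n) line_adj ((\<lambda>r. pv r n) ` {1..n-2})"
  unfolding resolving_set_def
proof (intro conjI ballI impI)
  show "(\<lambda>r. pv r n) ` {1..n-2} \<subseteq> L_vertices n" using n by (auto simp: pvL)
next
  fix x y assume x: "x \<in> L_vertices n" and y: "y \<in> L_vertices n" and xy: "x \<noteq> y"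
  obtain a b where xab: "x = pv a b" "a \<in> {1..n}" "b \<in> {1..n}" "a \<noteq> b" using x by (auto simp: L_eq)
  obtain c d where ycd: "y = pv c d" "c \<in> {1..n}" "d \<in> {1..n}" "c \<noteq> d" using y by (auto simp: L_eq)
  have ne: "\<not> (a = c \<and> b = d)" using xy xab ycd by auto
  show "\<exists>q\<in>(\<lambda>r. pv r n) ` {1..n-2}. gdist (L_vertices n) line_adj x q \<noteq> gdist (L_vertices n) line_adj y q"
  proof (rule ccontr)
    assume H: "\<not> ?thesis"
    have "DD a b r n = DD c d r n" if r: "r \<in> {1..n-2}" for r
    proof -
      have rr: "r \<in> {1..n}" "n \<in> {1..n}" "r \<noteq> n" using r n by auto
      have "pv r n \<in> (\<lambda>r. pv r n) ` {1..n-2}" using r by blast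
      then have "gdist (L_vertices n) line_adj x (pv r n) = gdist (L_vertices n) line_adj y (pv r n)"
        using H by blast
      then show ?thesis using gdist_pv[OF xab(2,3) rr(1,2) xab(4) rr(3)]
          gdist_pv[OF ycd(2,3) rr(1,2) ycd(4) rr(3)] xab ycd by simp
    qed
    then show False using key[OF n xab(2,3,4) ycd(2,3,4) ne] by blast
  qed
qed

lemma lower:
  assumes n: "5 \<le> n" and Q: "finite Q" "resolving_set (L_vertices n) line_adj Q"
  shows "n - 2 \<le> card Q"
proof (rule ccontr)
  assume "\<not> ?thesis"
  then have cQ: "card Q + 3 \<le> n" by auto
  have QL: "Q \<subseteq> L_vertices n" using Q by (simp add: resolving_set_def)
  have "card (fstv ` Q) \<le> card Q" using Q by (simp add: card_image_le)
  moreover have "card ({1..n} - fstv ` Q) \<ge> card {1..n} - card (fstv ` Q)"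
    by (rule diff_card_le_card_Diff) (use Q in auto)
  ultimately have "3 \<le> card ({1..n} - fstv ` Q)" using cQ by auto
  then obtain r s t where rst: "r \<in> {1..n} - fstv ` Q" "s \<in> {1..n} - fstv ` Q" "t \<in> {1..n} - fstv ` Q"
    "r \<noteq> s" "s \<noteq> t" "r \<noteq> t"
    using three_elems[of "{1..n} - fstv ` Q"] by blast
  have xL: "pv r s \<in> L_vertices n" "pv r t \<in> L_vertices n" using rst by (auto simp: pvL)
  have "pv r s \<noteq> pv r t" using rst by (simp add: pv_eq)
  then obtain q where q: "q \<in> Q" "gdist (L_vertices n) line_adj (pv r s) q \<noteq> gdist (L_vertices n) line_adj (pv r t) q"
    using Q xL unfolding resolving_set_def by blast
  obtain a b where qab: "q = pv a b" "a \<in> {1..n}" "b \<in> {1..n}" "a \<noteq> b" using q QL by (auto simp: L_eq)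
  have "fstv q = a" using qab by simp
  then have "a \<in> fstv ` Q" using q by blast
  then have "a \<noteq> r" "a \<noteq> s" "a \<noteq> t" using rst by auto
  then have "DD r s a b = DD r t a b" by (simp add: DD_def)
  moreover have r1: "r \<in> {1..n}" "s \<in> {1..n}" "t \<in> {1..n}" using rst by auto
  have g1: "gdist (L_vertices n) line_adj (pv r s) (pv a b) = enat (DD r s a b)"
    by (rule gdist_pv) (use r1 qab rst in auto)
  have g2: "gdist (L_vertices n) line_adj (pv r t) (pv a b) = enat (DD r t a b)"
    by (rule gdist_pv) (use r1 qab rst in auto)
  ultimately show False using q(2) qab(1) g1 g2 by simp
qed

theorem theorem3p8:
  fixes n :: nat
  assumes "n \<ge> 5"
  shows "metric_dimension (L_vertices n) line_adj = n - 2"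
  unfolding metric_dimension_def
proof (rule Least_equality)
  have "card ((\<lambda>r. pv r n) ` {1..n-2}) = n - 2"
    by (subst card_image) (auto simp: inj_on_def pv_eq)
  then show "\<exists>Q. finite Q \<and> card Q = n - 2 \<and> resolving_set (L_vertices n) line_adj Q"
    using upper[OF assms] by blast
next
  fix k assume "\<exists>Q. finite Q \<and> card Q = k \<and> resolving_set (L_vertices n) line_adj Q"
  then show "n - 2 \<le> k" using lower[OF assms] by blast
qed

end
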